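(* Let $m$ be an odd positive integer, $k\ge0$ an integer and $N=k+\frac{m-1}{2}$. Then for real $x_0$ and $r>0$ the following identities hold: \[\text{(i)}\quad \sum_{n=0}^{N}\binom{N}{n}(-2)^{-n}D_r(n)[\cos(2x_0r)]=\exp\left(-x_0^2\right)\sum_{n=0}^\infty\frac{2^{2n}n!\,x_0^{2n}}{(2n)!}L_n^{\left(k+\frac m2-1\right)}\left(r^2\right),\] \[\text{(ii)}\quad \sum_{n=0}^{N}\binom{N}{n}(-2)^{-n}D^r(n)[\sin(2x_0r)]=\exp\left(-x_0^2\right)\sum_{n=0}^\infty\frac{2^{2n+1}n!\,x_0^{2n+1}}{(2n+1)!}\,r\,L_n^{\left(k+\frac m2\right)}\left(r^2\right),\] where $L_n^{(a)}$ denote the generalized Laguerre polynomials.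
   Context: The operators act in the variable $r>0$ (with $x_0$ a parameter): $D_r(n)[f]=(r^{-1}\partial_r)^nf$ and $D^r(n)[f]=(\partial_r\circ r^{-1})^nf$ (i.e. $n$-fold application of $f\mapsto\partial_r(f/r)$), with $D_r(0)=D^r(0)=\mathrm{id}$. *)

theory Defs
  imports "HOL-Analysis.Analysis"
begin

definition Dr :: "nat \<Rightarrow> (real \<Rightarrow> real) \<Rightarrow> (real \<Rightarrow> real)" where
  "Dr n f = ((\<lambda>g r. deriv g r / r) ^^ n) f"

definition Dup :: "nat \<Rightarrow> (real \<Rightarrow> real) \<Rightarrow> (real \<Rightarrow> real)" where
  "Dup n f = ((\<lambda>g r. deriv (\<lambda>s. g s / s) r) ^^ n) f"

definition laguerre :: "nat \<Rightarrow> real \<Rightarrow> real \<Rightarrow> real" where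
  "laguerre n a x = (\<Sum>i\<le>n. (-1)^i * ((real n + a) gchoose (n - i)) * x^i / fact i)"

end

theory Submission imports Defs begin

lemma diffs_pow: "((diffs ^^ n) c) p = fact (p + n) / fact p * (c (p + n) :: real)"
proof (induction n arbitrary: p)
  case 0 then show ?case by simp
next
  case (Suc n)
  have "((diffs ^^ Suc n) c) p = of_nat (Suc p) * ((diffs ^^ n) c) (Suc p)"
    by (simp add: diffs_def)
  also have "\<dots> = of_nat (Suc p) * (fact (Suc p + n) / fact (Suc p) * c (Suc p + n))"
    using Suc by simp
  also have "\<dots> = fact (p + Suc n) / fact p * c (p + Suc n)"
  proof -
    have "Suc p + n = p + Suc n" by simp
    moreover have "(fact (Suc p) :: real) = of_nat (Suc p) * fact p" by simp
    ultimately show ?thesis by (simp del: fact_Suc of_nat_Suc add: field_simps)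
  qed
  finally show ?case .
qed

lemma diffs_pow_summable:
  assumes "\<And>y::real. summable (\<lambda>p. c p * y^p)"
  shows "summable (\<lambda>p. (diffs ^^ n) c p * y^p)"
proof (induction n arbitrary: y)
  case 0 then show ?case using assms by simp
next
  case (Suc n)
  show ?case using termdiff_converges_all[of "(diffs ^^ n) c", OF Suc] by simp
qed

lemma diffs_cmult: "diffs (\<lambda>p. a * c p) = (\<lambda>p. (a::real) * diffs c p)"
  by (auto simp: diffs_def fun_eq_iff)

lemma deriv_sq_powser:
  fixes h :: "real \<Rightarrow> real"
  assumes sc: "\<And>y. summable (\<lambda>p. c p * y^p)"
    and h: "\<And>s. s \<noteq> 0 \<Longrightarrow> h s = (\<Sum>p. c p * (s^2)^p)"
    and r: "r \<noteq> 0"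
  shows "deriv h r = 2 * r * (\<Sum>p. diffs c p * (r^2)^p)"
proof -
  have ev: "eventually (\<lambda>s. h s = (\<Sum>p. c p * (s^2)^p)) (nhds r)"
    using t1_space_nhds[OF r] by (rule eventually_mono) (use h in auto)
  have d: "((\<lambda>s. \<Sum>p. c p * (s^2)^p) has_field_derivative (\<Sum>p. diffs c p * (r^2)^p) * (2 * r)) (at r)"
    by (rule DERIV_chain2[OF termdiffs_strong_converges_everywhere[OF sc]])
       (auto intro!: derivative_eq_intros)
  have "deriv h r = deriv (\<lambda>s. \<Sum>p. c p * (s^2)^p) r"
    by (rule deriv_cong_ev[OF ev refl])
  also have "\<dots> = (\<Sum>p. diffs c p * (r^2)^p) * (2 * r)"
    by (rule DERIV_imp_deriv[OF d])
  finally show ?thesis by simp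
qed

lemma Dr_powser:
  fixes f :: "real \<Rightarrow> real"
  assumes sc: "\<And>y. summable (\<lambda>p. c p * y^p)"
    and f: "\<And>s. s \<noteq> 0 \<Longrightarrow> f s = (\<Sum>p. c p * (s^2)^p)"
  shows "r \<noteq> 0 \<Longrightarrow> Dr n f r = (\<Sum>p. 2^n * (diffs ^^ n) c p * (r^2)^p)"
proof (induction n arbitrary: r)
  case 0 then show ?case using f by (simp add: Dr_def)
next
  case (Suc n)
  have sc': "\<And>y. summable (\<lambda>p. (2^n * (diffs ^^ n) c p) * y^p)"
    using diffs_pow_summable[OF sc] by (simp add: mult.assoc summable_mult)
  have "Dr (Suc n) f r = deriv (Dr n f) r / r" by (simp add: Dr_def)
  also have "deriv (Dr n f) r = 2 * r * (\<Sum>p. diffs (\<lambda>p. 2^n * (diffs ^^ n) c p) p * (r^2)^p)"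
    by (rule deriv_sq_powser[OF sc']) (use Suc in auto)
  also have "\<dots> / r = (\<Sum>p. 2 * (diffs (\<lambda>p. 2^n * (diffs ^^ n) c p) p * (r^2)^p))"
    using Suc.prems termdiff_converges_all[OF sc'] by (simp add: suminf_mult)
  also have "\<dots> = (\<Sum>p. 2^Suc n * (diffs ^^ Suc n) c p * (r^2)^p)"
    by (simp add: diffs_cmult mult.assoc)
  finally show ?case .
qed

lemma Dup_powser:
  fixes f :: "real \<Rightarrow> real"
  assumes sc: "\<And>y. summable (\<lambda>p. c p * y^p)"
    and f: "\<And>s. s \<noteq> 0 \<Longrightarrow> f s = s * (\<Sum>p. c p * (s^2)^p)"
  shows "r \<noteq> 0 \<Longrightarrow> Dup n f r = r * (\<Sum>p. 2^n * (diffs ^^ n) c p * (r^2)^p)"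
proof (induction n arbitrary: r)
  case 0 then show ?case using f by (simp add: Dup_def)
next
  case (Suc n)
  have sc': "\<And>y. summable (\<lambda>p. (2^n * (diffs ^^ n) c p) * y^p)"
    using diffs_pow_summable[OF sc] by (simp add: mult.assoc summable_mult)
  have "Dup (Suc n) f r = deriv (\<lambda>s. Dup n f s / s) r" by (simp add: Dup_def)
  also have "\<dots> = 2 * r * (\<Sum>p. diffs (\<lambda>p. 2^n * (diffs ^^ n) c p) p * (r^2)^p)"
    by (rule deriv_sq_powser[OF sc']) (use Suc in auto)
  also have "\<dots> = r * (\<Sum>p. 2 * (diffs (\<lambda>p. 2^n * (diffs ^^ n) c p) p * (r^2)^p))"
    using termdiff_converges_all[OF sc'] by (simp add: suminf_mult)
  also have "\<dots> = r * (\<Sum>p. 2^Suc n * (diffs ^^ Suc n) c p * (r^2)^p)"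
    by (simp add: diffs_cmult mult.assoc)
  finally show ?case .
qed


lemma comb_base:
  fixes w :: "nat \<Rightarrow> real" and a :: real
  assumes rec: "\<And>m. w (Suc m) * (real m + a + 1) = w m"
  shows "w (i+k) * ((real (i+k) + a) gchoose k) = w i / fact k"
proof (induction k)
  case 0 then show ?case by simp
next
  case (Suc k)
  have ab: "of_nat (Suc k) * ((real (i + Suc k) + a) gchoose Suc k)
        = (real (i + Suc k) + a) * ((real (i + k) + a) gchoose k)"
    using gbinomial_absorption[of k "real (i + Suc k) + a"] by (simp add: algebra_simps)
  have "real (Suc k) * (w (i + Suc k) * ((real (i + Suc k) + a) gchoose Suc k))
      = w (i + Suc k) * (of_nat (Suc k) * ((real (i + Suc k) + a) gchoose Suc k))"
    by (simp only: mult.left_commute)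
  also have "\<dots> = w (Suc (i + k)) * (real (i + k) + a + 1) * ((real (i + k) + a) gchoose k)"
    unfolding ab by (simp add: algebra_simps)
  also have "\<dots> = w i / fact k" using rec[of "i+k"] Suc by simp
  finally have "real (Suc k) * (w (i + Suc k) * ((real (i + Suc k) + a) gchoose Suc k)) = w i / fact k" .
  then show ?case by (simp add: field_simps del: of_nat_Suc)
qed

lemma choose_sum_split:
  fixes h :: "nat \<Rightarrow> real"
  shows "(\<Sum>n\<le>Suc N. real (Suc N choose n) * h n)
       = (\<Sum>n\<le>N. real (N choose n) * h n) + (\<Sum>n\<le>N. real (N choose n) * h (Suc n))"
proof -
  have "(\<Sum>n\<le>Suc N. real (Suc N choose n) * h n)
     = h 0 + (\<Sum>n\<le>N. real (Suc N choose Suc n) * h (Suc n))"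
    by (subst sum.atMost_Suc_shift) simp
  also have "\<dots> = h 0 + (\<Sum>n\<le>N. real (N choose Suc n) * h (Suc n)) + (\<Sum>n\<le>N. real (N choose n) * h (Suc n))"
    by (simp only: binomial_Suc_Suc of_nat_add distrib_right sum.distrib add.assoc add.commute)
  also have "h 0 + (\<Sum>n\<le>N. real (N choose Suc n) * h (Suc n)) = (\<Sum>n\<le>Suc N. real (N choose n) * h n)"
    by (subst sum.atMost_Suc_shift) simp
  also have "\<dots> = (\<Sum>n\<le>N. real (N choose n) * h n)" by simp
  finally show ?thesis .
qed

lemma comb:
  fixes w :: "nat \<Rightarrow> real" and a :: real
  assumes rec: "\<And>m. w (Suc m) * (real m + a + 1) = w m"
  shows "w (i+k) * ((real (i+k+N) + a) gchoose k)
     = (\<Sum>n\<le>N. real (N choose n) * (w (i+n) * (if n \<le> k then 1 / fact (k-n) else 0)))"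
proof (induction N arbitrary: i k)
  case 0 then show ?case using comb_base[OF rec, of i k] by simp
next
  case (Suc N)
  show ?case
  proof (cases k)
    case 0
    then show ?thesis by (subst sum.atMost_Suc_shift) simp
  next
    case (Suc k')
    have s2: "(\<Sum>n\<le>N. real (N choose n) * (w (i + Suc n) * (if Suc n \<le> k then 1 / fact (k - Suc n) else 0)))
         = (\<Sum>n\<le>N. real (N choose n) * (w (Suc i + n) * (if n \<le> k' then 1 / fact (k' - n) else 0)))"
      using Suc by (intro sum.cong) auto
    have "(\<Sum>n\<le>Suc N. real (Suc N choose n) * (w (i + n) * (if n \<le> k then 1 / fact (k - n) else 0)))
       = w (i+k) * ((real (i+k+N) + a) gchoose k) + w (Suc i+k') * ((real (Suc i+k'+N) + a) gchoose k')"
      by (subst choose_sum_split, subst s2, simp only: Suc.IH)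
    also have "\<dots> = w (i+k) * ((real (i+k'+N) + a + 1) gchoose Suc k') + w (i+k) * ((real (i+k'+N) + a + 1) gchoose k')"
      using Suc by (simp add: algebra_simps)
    also have "\<dots> = w (i+k) * ((real (i+k'+N) + a + 1 + 1) gchoose Suc k')"
      using gbinomial_Suc_Suc[of "real (i+k'+N) + a + 1" k'] by (simp add: algebra_simps)
    also have "\<dots> = w (i+k) * ((real (i+k+Suc N) + a) gchoose k)"
      using Suc by (simp add: algebra_simps)
    finally show ?thesis by simp
  qed
qed


lemma lag_ident:
  fixes w :: "nat \<Rightarrow> real" and a y :: real
  assumes rec: "\<And>m. w (Suc m) * (real m + a + 1) = w m"
  shows "(\<Sum>n\<le>N. real (N choose n) * (if n \<le> j then (\<Sum>i\<le>j-n. (-1)^i * w (i+n) * y^i / (fact i * fact (j-n-i))) else 0))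
     = w j * (\<Sum>i\<le>j. (-1)^i * ((real j + (real N + a)) gchoose (j-i)) * y^i / fact i)"
proof -
  have "w j * (\<Sum>i\<le>j. (-1)^i * ((real j + (real N + a)) gchoose (j-i)) * y^i / fact i)
     = (\<Sum>i\<le>j. (-1)^i * y^i / fact i * (w (i + (j-i)) * ((real (i + (j-i) + N) + a) gchoose (j-i))))"
    by (subst sum_distrib_left, intro sum.cong) (auto simp: algebra_simps)
  also have "\<dots> = (\<Sum>i\<le>j. (-1)^i * y^i / fact i * (\<Sum>n\<le>N. real (N choose n) * (w (i+n) * (if n \<le> j-i then 1 / fact (j-i-n) else 0))))"
    by (simp only: comb[OF rec])
  also have "\<dots> = (\<Sum>n\<le>N. real (N choose n) * (\<Sum>i\<le>j. (-1)^i * y^i / fact i * (w (i+n) * (if n \<le> j-i then 1 / fact (j-i-n) else 0))))"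
    by (simp add: sum_distrib_left sum.swap[of _ "{..N}"] algebra_simps)
  also have "\<dots> = (\<Sum>n\<le>N. real (N choose n) * (if n \<le> j then (\<Sum>i\<le>j-n. (-1)^i * w (i+n) * y^i / (fact i * fact (j-n-i))) else 0))"
  proof (intro sum.cong refl arg_cong2[where f="(*)"])
    fix n assume "n \<in> {..N}"
    show "(\<Sum>i\<le>j. (-1)^i * y^i / fact i * (w (i+n) * (if n \<le> j-i then 1 / fact (j-i-n) else 0)))
       = (if n \<le> j then (\<Sum>i\<le>j-n. (-1)^i * w (i+n) * y^i / (fact i * fact (j-n-i))) else 0)"
    proof (cases "n \<le> j")
      case True
      have "(\<Sum>i\<le>j. (-1)^i * y^i / fact i * (w (i+n) * (if n \<le> j-i then 1 / fact (j-i-n) else 0)))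
          = (\<Sum>i\<le>j-n. (-1)^i * y^i / fact i * (w (i+n) * (if n \<le> j-i then 1 / fact (j-i-n) else 0)))"
        by (rule sum.mono_neutral_right) auto
      also have "\<dots> = (\<Sum>i\<le>j-n. (-1)^i * w (i+n) * y^i / (fact i * fact (j-n-i)))"
        using True by (intro sum.cong refl) (auto simp: field_simps)
      finally show ?thesis using True by simp
    qed (auto intro!: sum.neutral)
  qed
  finally show ?thesis ..
qed


lemma series_main:
  fixes c :: "nat \<Rightarrow> nat \<Rightarrow> real" and K :: "nat \<Rightarrow> real" and X y :: real
  assumes sc: "\<And>n z. summable (\<lambda>i. c n i * z^i)"
  shows "(\<lambda>j. \<Sum>n\<le>N. K n * (if n \<le> j then (\<Sum>i\<le>j-n. c n i * y^i * (X^(j-n-i) / fact (j-n-i))) else 0))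
     sums (\<Sum>n\<le>N. K n * ((\<Sum>i. c n i * y^i) * exp X))"
proof (rule sums_sum, rule sums_mult)
  fix n
  have a: "summable (\<lambda>i. norm (c n i * y^i))"
    by (rule powser_insidea[OF sc[of n "\<bar>y\<bar> + 1"]]) auto
  have e: "(\<lambda>q. X^q / fact q) sums exp X"
    using exp_converges[of X] by (simp add: divide_inverse mult.commute)
  have e2: "(\<lambda>q. \<bar>X\<bar>^q / fact q) sums exp \<bar>X\<bar>"
    using exp_converges[of "\<bar>X\<bar>"] by (simp add: divide_inverse mult.commute)
  have b: "summable (\<lambda>q. norm (X^q / fact q))"
    using sums_summable[OF e2] by (simp add: power_abs)
  have "(\<lambda>J. \<Sum>i\<le>J. c n i * y^i * (X^(J-i) / fact (J-i))) sums ((\<Sum>i. c n i * y^i) * (\<Sum>q. X^q / fact q))"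
    by (rule Cauchy_product_sums[OF a b])
  then have cp: "(\<lambda>J. \<Sum>i\<le>J. c n i * y^i * (X^(J-i) / fact (J-i))) sums ((\<Sum>i. c n i * y^i) * exp X)"
    using sums_unique[OF e] by simp
  let ?f = "\<lambda>j. if n \<le> j then (\<Sum>i\<le>j-n. c n i * y^i * (X^(j-n-i) / fact (j-n-i))) else 0"
  have "(\<lambda>j. ?f (j + n)) sums ((\<Sum>i. c n i * y^i) * exp X)"
    using cp by simp
  then show "?f sums ((\<Sum>i. c n i * y^i) * exp X)"
    by (subst (asm) sums_zero_iff_shift) auto
qed

lemma rec_cos: "(4^Suc m * fact (Suc m) / fact (2 * Suc m)) * (real m + (-1/2) + 1) = (4^m * fact m / fact (2*m) :: real)"
proof -
  define Q where "Q = real (2*m+2) * real (2*m+1)"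
  have Q: "Q > 0" unfolding Q_def by simp
  have f: "fact (2 * Suc m) = Q * (fact (2*m) :: real)"
    unfolding Q_def by (simp add: algebra_simps)
  have "(4::real)^Suc m * fact (Suc m) * (real m + (-1/2) + 1) = 4^m * fact m * Q" unfolding Q_def by (simp add: algebra_simps)
  then have "(4^Suc m * fact (Suc m) / fact (2 * Suc m)) * (real m + (-1/2) + 1) = 4^m * fact m * Q / (Q * fact (2*m))"
    unfolding f by (simp add: field_simps)
  also have "\<dots> = 4^m * fact m / fact (2*m)" using Q by simp
  finally show ?thesis .
qed
lemma rec_sin: "(4^Suc m * fact (Suc m) / fact (2 * Suc m + 1)) * (real m + 1/2 + 1) = (4^m * fact m / fact (2*m+1) :: real)"
proof -
  define Q where "Q = real (2*m+3) * real (2*m+2)"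
  have Q: "Q > 0" unfolding Q_def by simp
  have f: "fact (2 * Suc m + 1) = Q * (fact (2*m+1) :: real)"
    unfolding Q_def by (simp add: algebra_simps numeral_3_eq_3)
  have "(4::real)^Suc m * fact (Suc m) * (real m + 1/2 + 1) = 4^m * fact m * Q" unfolding Q_def by (simp add: algebra_simps)
  then have "(4^Suc m * fact (Suc m) / fact (2 * Suc m + 1)) * (real m + 1/2 + 1) = 4^m * fact m * Q / (Q * fact (2*m+1))"
    unfolding f by (simp add: field_simps)
  also have "\<dots> = 4^m * fact m / fact (2*m+1)" using Q by simp
  finally show ?thesis .
qed
lemma abs_alg:
  fixes C s t F G u P X H Y Z D :: real
  assumes "s \<noteq> 0" "t \<noteq> 0" "G \<noteq> 0" "H \<noteq> 0" "D \<noteq> 0"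
  shows "C * (1 / (s * t)) * ((t * (F / G * (u * s * (P * X) / H))) * Y * (Z / D))
      = X * Z * (C * (u * (P * F / H) * Y / (G * D)))"
  using assms by (simp add: field_simps)

lemma term_cos:
  fixes x y :: real
  assumes "i \<le> j - n" "n \<le> j"
  shows "real (N choose n) * (-2) powi (- int n) * ((2^n * (fact (i+n) / fact i * ((-1)^(i+n) * (2*x)^(2*(i+n)) / fact (2*(i+n))))) * y^i * ((x^2)^(j-n-i) / fact (j-n-i)))
       = x^(2*j) * (real (N choose n) * ((-1)^i * (4^(i+n) * fact (i+n) / fact (2*(i+n))) * y^i / (fact i * fact (j-n-i))))"
proof -
  define d where "d = j - n - i"
  have j: "j = i + n + d" using assms unfolding d_def by simp
  have p: "(-2::real) powi (- int n) = 1 / ((-1)^n * 2^n)"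
    by (simp add: power_int_minus power_mult_distrib[symmetric] divide_inverse)
  have q0: "\<And>k. (2*x)^(2*k) = 4^k * x^(2*k)"
    by (simp only: power_mult power_mult_distrib) simp
  have q: "(2*x)^(2*(i+n)) = 4^(i+n) * x^(2*(i+n))" by (rule q0)
  have xj: "x^(2*j) = x^(2*(i+n)) * (x^2)^d"
    by (simp add: j power_add power_mult[symmetric] algebra_simps)
  have s: "(-1::real)^(i+n) = (-1)^i * (-1)^n" by (simp add: power_add)
  have jd: "j - n - i = d" using d_def by simp
  show ?thesis unfolding p q xj s jd mult.assoc[symmetric, of "(-1)^i" "(-1)^n"]
    by (rule abs_alg) auto
qed

lemma term_sin:
  fixes x y :: real
  assumes "i \<le> j - n" "n \<le> j"
  shows "real (N choose n) * (-2) powi (- int n) * ((2^n * (fact (i+n) / fact i * ((-1)^(i+n) * (2*x)^(2*(i+n)+1) / fact (2*(i+n)+1)))) * y^i * ((x^2)^(j-n-i) / fact (j-n-i)))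
       = (2 * x^(2*j+1)) * (real (N choose n) * ((-1)^i * (4^(i+n) * fact (i+n) / fact (2*(i+n)+1)) * y^i / (fact i * fact (j-n-i))))"
proof -
  define d where "d = j - n - i"
  have j: "j = i + n + d" using assms unfolding d_def by simp
  have p: "(-2::real) powi (- int n) = 1 / ((-1)^n * 2^n)"
    by (simp add: power_int_minus power_mult_distrib[symmetric] divide_inverse)
  have q0: "\<And>k. (2*x)^(2*k) = 4^k * x^(2*k)"
    by (simp only: power_mult power_mult_distrib) simp
  have q: "(2*x)^(2*(i+n)+1) = 4^(i+n) * (2 * x * x^(2*(i+n)))"
    by (simp only: power_Suc2 Suc_eq_plus1[symmetric] q0) simp
  have xj: "2 * x^(2*j+1) = (2 * x * x^(2*(i+n))) * (x^2)^d"
    by (simp add: j power_add power_mult[symmetric] algebra_simps)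
  have s: "(-1::real)^(i+n) = (-1)^i * (-1)^n" by (simp add: power_add)
  have jd: "j - n - i = d" using d_def by simp
  show ?thesis unfolding p q xj s jd mult.assoc[symmetric, of "(-1)^i" "(-1)^n"]
    by (rule abs_alg) auto
qed

definition bcos :: "real \<Rightarrow> nat \<Rightarrow> real" where
  "bcos x i = (-1)^i * (2*x)^(2*i) / fact (2*i)"
definition bsin :: "real \<Rightarrow> nat \<Rightarrow> real" where
  "bsin x i = (-1)^i * (2*x)^(2*i+1) / fact (2*i+1)"

lemma bcos_summable: "summable (\<lambda>i. bcos x i * z^i)"
proof (rule summable_comparison_test)
  show "summable (\<lambda>i. (4*x^2*\<bar>z\<bar>)^i / fact i)"
    using exp_converges[of "4*x^2*\<bar>z\<bar>"] by (auto simp: sums_iff divide_inverse mult.commute)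
  show "\<exists>N. \<forall>n\<ge>N. norm (bcos x n * z^n) \<le> (4*x^2*\<bar>z\<bar>)^n / fact n"
  proof (intro exI allI impI)
    fix n :: nat
    have e: "\<bar>(2*x)^(2*n)\<bar> * \<bar>z\<bar>^n = (4*x^2*\<bar>z\<bar>)^n"
      by (simp add: power_mult power_mult_distrib power_abs)
    have "norm (bcos x n * z^n) = (4*x^2*\<bar>z\<bar>)^n / fact (2*n)"
      unfolding bcos_def using e by (simp add: abs_mult power_abs)
    also have "\<dots> \<le> (4*x^2*\<bar>z\<bar>)^n / fact n"
      by (intro divide_left_mono fact_mono) auto
    finally show "norm (bcos x n * z^n) \<le> (4*x^2*\<bar>z\<bar>)^n / fact n" .
  qed
qed

lemma bsin_summable: "summable (\<lambda>i. bsin x i * z^i)"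
proof (rule summable_comparison_test)
  show "summable (\<lambda>i. \<bar>2*x\<bar> * ((4*x^2*\<bar>z\<bar>)^i / fact i))"
    using exp_converges[of "4*x^2*\<bar>z\<bar>"] by (intro summable_mult) (auto simp: sums_iff divide_inverse mult.commute)
  show "\<exists>N. \<forall>n\<ge>N. norm (bsin x n * z^n) \<le> \<bar>2*x\<bar> * ((4*x^2*\<bar>z\<bar>)^n / fact n)"
  proof (intro exI allI impI)
    fix n :: nat
    have e: "\<bar>(2*x)^(2*n+1)\<bar> * \<bar>z\<bar>^n = \<bar>2*x\<bar> * (4*x^2*\<bar>z\<bar>)^n"
      by (simp add: power_mult power_mult_distrib power_abs abs_mult)
    have "norm (bsin x n * z^n) = \<bar>2*x\<bar> * (4*x^2*\<bar>z\<bar>)^n / fact (2*n+1)"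
      unfolding bsin_def using e by (simp add: abs_mult power_abs)
    also have "\<dots> \<le> \<bar>2*x\<bar> * ((4*x^2*\<bar>z\<bar>)^n / fact n)"
      by (subst times_divide_eq_right[symmetric], intro mult_left_mono divide_left_mono fact_mono) auto
    finally show "norm (bsin x n * z^n) \<le> \<bar>2*x\<bar> * ((4*x^2*\<bar>z\<bar>)^n / fact n)" .
  qed
qed

lemma cos_rep: "cos (2*x*t) = (\<Sum>i. bcos x i * (t^2)^i)"
proof -
  have "(\<lambda>i. (-1)^i / fact (2*i) * (2*x*t)^(2*i)) sums cos (2*x*t)" by (rule cos_paired)
  moreover have "\<And>i. (-1)^i / fact (2*i) * (2*x*t)^(2*i) = bcos x i * (t^2)^i"
    unfolding bcos_def by (simp add: power_mult_distrib power_mult[symmetric] mult.commute)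
  ultimately show ?thesis by (simp add: sums_iff)
qed

lemma sin_rep: "sin (2*x*t) = t * (\<Sum>i. bsin x i * (t^2)^i)"
proof -
  have "(\<lambda>i. (-1)^i / fact (2*i+1) * (2*x*t)^(2*i+1)) sums sin (2*x*t)" by (rule sin_paired)
  moreover have "\<And>i. (-1)^i / fact (2*i+1) * (2*x*t)^(2*i+1) = t * (bsin x i * (t^2)^i)"
    unfolding bsin_def by (simp add: power_mult_distrib power_mult[symmetric] mult.commute)
  ultimately have "(\<lambda>i. t * (bsin x i * (t^2)^i)) sums sin (2*x*t)" by simp
  moreover have "(\<lambda>i. t * (bsin x i * (t^2)^i)) sums (t * (\<Sum>i. bsin x i * (t^2)^i))"
    using bsin_summable by (intro sums_mult summable_sums)
  ultimately show ?thesis using sums_unique2 by blast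
qed


lemma U_cos:
  fixes x y :: real
  shows "(\<Sum>n\<le>N. (real (N choose n) * (-2) powi (- int n)) * (if n \<le> j then (\<Sum>i\<le>j-n. (2^n * (diffs ^^ n) (bcos x) i) * y^i * ((x^2)^(j-n-i)/fact (j-n-i))) else 0))
    = x^(2*j) * ((4^j * fact j / fact (2*j)) * laguerre j (real N + (-1/2)) y)"
proof -
  have st: "(real (N choose n) * (-2) powi (- int n)) * (if n \<le> j then (\<Sum>i\<le>j-n. (2^n * (diffs ^^ n) (bcos x) i) * y^i * ((x^2)^(j-n-i)/fact (j-n-i))) else 0)
     = x^(2*j) * (real (N choose n) * (if n \<le> j then (\<Sum>i\<le>j-n. (-1)^i * (4^(i+n) * fact (i+n) / fact (2*(i+n))) * y^i / (fact i * fact (j-n-i))) else 0))" for n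
  proof (cases "n \<le> j")
    case True
    have "(real (N choose n) * (-2) powi (- int n)) * (\<Sum>i\<le>j-n. (2^n * (diffs ^^ n) (bcos x) i) * y^i * ((x^2)^(j-n-i)/fact (j-n-i)))
       = (\<Sum>i\<le>j-n. x^(2*j) * (real (N choose n) * ((-1)^i * (4^(i+n) * fact (i+n) / fact (2*(i+n))) * y^i / (fact i * fact (j-n-i)))))"
      unfolding sum_distrib_left
    proof (intro sum.cong refl)
      fix i assume "i \<in> {..j-n}"
      then have "i \<le> j - n" by simp
      then show "(real (N choose n) * (-2) powi (- int n)) * ((2^n * (diffs ^^ n) (bcos x) i) * y^i * ((x^2)^(j-n-i)/fact (j-n-i)))
          = x^(2*j) * (real (N choose n) * ((-1)^i * (4^(i+n) * fact (i+n) / fact (2*(i+n))) * y^i / (fact i * fact (j-n-i))))"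
        using term_cos[of i j n N x y] True unfolding diffs_pow bcos_def by simp
    qed
    then show ?thesis using True by (simp add: sum_distrib_left)
  qed simp
  have "(\<Sum>n\<le>N. (real (N choose n) * (-2) powi (- int n)) * (if n \<le> j then (\<Sum>i\<le>j-n. (2^n * (diffs ^^ n) (bcos x) i) * y^i * ((x^2)^(j-n-i)/fact (j-n-i))) else 0))
     = x^(2*j) * (\<Sum>n\<le>N. real (N choose n) * (if n \<le> j then (\<Sum>i\<le>j-n. (-1)^i * (4^(i+n) * fact (i+n) / fact (2*(i+n))) * y^i / (fact i * fact (j-n-i))) else 0))"
    unfolding st sum_distrib_left ..
  also have "(\<Sum>n\<le>N. real (N choose n) * (if n \<le> j then (\<Sum>i\<le>j-n. (-1)^i * (4^(i+n) * fact (i+n) / fact (2*(i+n))) * y^i / (fact i * fact (j-n-i))) else 0))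
     = (4^j * fact j / fact (2*j)) * (\<Sum>i\<le>j. (-1)^i * ((real j + (real N + (-1/2))) gchoose (j-i)) * y^i / fact i)"
    using lag_ident[where w="\<lambda>m. 4^m * fact m / fact (2*m)" and a="-1/2", OF rec_cos] by simp
  finally show ?thesis unfolding laguerre_def .
qed

lemma U_sin:
  fixes x y :: real
  shows "(\<Sum>n\<le>N. (real (N choose n) * (-2) powi (- int n)) * (if n \<le> j then (\<Sum>i\<le>j-n. (2^n * (diffs ^^ n) (bsin x) i) * y^i * ((x^2)^(j-n-i)/fact (j-n-i))) else 0))
    = (2 * x^(2*j+1)) * ((4^j * fact j / fact (2*j+1)) * laguerre j (real N + 1/2) y)"
proof -
  have st: "(real (N choose n) * (-2) powi (- int n)) * (if n \<le> j then (\<Sum>i\<le>j-n. (2^n * (diffs ^^ n) (bsin x) i) * y^i * ((x^2)^(j-n-i)/fact (j-n-i))) else 0)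
     = (2 * x^(2*j+1)) * (real (N choose n) * (if n \<le> j then (\<Sum>i\<le>j-n. (-1)^i * (4^(i+n) * fact (i+n) / fact (2*(i+n)+1)) * y^i / (fact i * fact (j-n-i))) else 0))" for n
  proof (cases "n \<le> j")
    case True
    have "(real (N choose n) * (-2) powi (- int n)) * (\<Sum>i\<le>j-n. (2^n * (diffs ^^ n) (bsin x) i) * y^i * ((x^2)^(j-n-i)/fact (j-n-i)))
       = (\<Sum>i\<le>j-n. (2 * x^(2*j+1)) * (real (N choose n) * ((-1)^i * (4^(i+n) * fact (i+n) / fact (2*(i+n)+1)) * y^i / (fact i * fact (j-n-i)))))"
      unfolding sum_distrib_left
    proof (intro sum.cong refl)
      fix i assume "i \<in> {..j-n}"
      then have "i \<le> j - n" by simp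
      then show "(real (N choose n) * (-2) powi (- int n)) * ((2^n * (diffs ^^ n) (bsin x) i) * y^i * ((x^2)^(j-n-i)/fact (j-n-i)))
          = (2 * x^(2*j+1)) * (real (N choose n) * ((-1)^i * (4^(i+n) * fact (i+n) / fact (2*(i+n)+1)) * y^i / (fact i * fact (j-n-i))))"
        using term_sin[of i j n N x y] True unfolding diffs_pow bsin_def by simp
    qed
    then show ?thesis using True by (simp add: sum_distrib_left)
  qed simp
  have "(\<Sum>n\<le>N. (real (N choose n) * (-2) powi (- int n)) * (if n \<le> j then (\<Sum>i\<le>j-n. (2^n * (diffs ^^ n) (bsin x) i) * y^i * ((x^2)^(j-n-i)/fact (j-n-i))) else 0))
     = (2 * x^(2*j+1)) * (\<Sum>n\<le>N. real (N choose n) * (if n \<le> j then (\<Sum>i\<le>j-n. (-1)^i * (4^(i+n) * fact (i+n) / fact (2*(i+n)+1)) * y^i / (fact i * fact (j-n-i))) else 0))"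
    unfolding st sum_distrib_left ..
  also have "(\<Sum>n\<le>N. real (N choose n) * (if n \<le> j then (\<Sum>i\<le>j-n. (-1)^i * (4^(i+n) * fact (i+n) / fact (2*(i+n)+1)) * y^i / (fact i * fact (j-n-i))) else 0))
     = (4^j * fact j / fact (2*j+1)) * (\<Sum>i\<le>j. (-1)^i * ((real j + (real N + 1/2)) gchoose (j-i)) * y^i / fact i)"
    using lag_ident[where w="\<lambda>m. 4^m * fact m / fact (2*m+1)" and a="1/2", OF rec_sin] by simp
  finally show ?thesis unfolding laguerre_def .
qed


theorem corollary1:
  fixes m k :: nat and x r :: real
  assumes "odd m" and "m > 0" and "r > 0"
  defines "N \<equiv> k + (m - 1) div 2"
  shows "((\<lambda>n. exp (- (x^2)) * (2^(2*n) * fact n * x^(2*n) / fact (2*n))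
              * laguerre n (real k + real m / 2 - 1) (r^2))
           sums (\<Sum>n\<le>N. real (N choose n) * (-2) powi (- int n) * Dr n (\<lambda>t. cos (2 * x * t)) r)) \<and>
         ((\<lambda>n. exp (- (x^2)) * (2^(2*n+1) * fact n * x^(2*n+1) / fact (2*n+1))
              * r * laguerre n (real k + real m / 2) (r^2))
           sums (\<Sum>n\<le>N. real (N choose n) * (-2) powi (- int n) * Dup n (\<lambda>t. sin (2 * x * t)) r))"
proof -
  obtain t where mt: "m = 2*t+1" using assms(1) oddE by blast
  have Nt: "N = k + t" unfolding N_def mt by simp
  have a1: "real k + real m / 2 - 1 = real N + (-1/2)" unfolding Nt mt by (simp add: field_simps)
  have a2: "real k + real m / 2 = real N + 1/2" unfolding Nt mt by (simp add: field_simps)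
  have r0: "r \<noteq> 0" using assms(3) by simp
  define K where "K n = real (N choose n) * (-2) powi (- int n)" for n
  have p4: "\<And>j. (2::real)^(2*j) = 4^j" by (simp add: power_mult)
  have ex: "exp (- (x^2)) * exp (x^2) = 1" by (simp add: exp_minus)
  define c where "c n i = 2^n * (diffs ^^ n) (bcos x) i" for n i
  have sc: "\<And>n z. summable (\<lambda>i. c n i * z^i)"
    unfolding c_def using diffs_pow_summable[OF bcos_summable] by (simp add: mult.assoc summable_mult)
  have D: "\<And>n. Dr n (\<lambda>t. cos (2 * x * t)) r = (\<Sum>i. c n i * (r^2)^i)"
    unfolding c_def by (rule Dr_powser[OF bcos_summable cos_rep r0])
  have "(\<lambda>j. exp (- (x^2)) * (\<Sum>n\<le>N. K n * (if n \<le> j then (\<Sum>i\<le>j-n. c n i * (r^2)^i * ((x^2)^(j-n-i) / fact (j-n-i))) else 0)))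
     sums (exp (- (x^2)) * (\<Sum>n\<le>N. K n * ((\<Sum>i. c n i * (r^2)^i) * exp (x^2))))"
    by (rule sums_mult[OF series_main[OF sc]])
  also have "exp (- (x^2)) * (\<Sum>n\<le>N. K n * ((\<Sum>i. c n i * (r^2)^i) * exp (x^2)))
      = (\<Sum>n\<le>N. real (N choose n) * (-2) powi (- int n) * Dr n (\<lambda>t. cos (2 * x * t)) r)"
    unfolding D K_def sum_distrib_left by (intro sum.cong refl) (use ex in \<open>simp add: algebra_simps\<close>)
  also have "(\<lambda>j. exp (- (x^2)) * (\<Sum>n\<le>N. K n * (if n \<le> j then (\<Sum>i\<le>j-n. c n i * (r^2)^i * ((x^2)^(j-n-i) / fact (j-n-i))) else 0)))
     = (\<lambda>n. exp (- (x^2)) * (2^(2*n) * fact n * x^(2*n) / fact (2*n)) * laguerre n (real k + real m / 2 - 1) (r^2))"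
    unfolding K_def c_def U_cos a1 p4 by (simp add: fun_eq_iff algebra_simps)
  finally have P1: "(\<lambda>n. exp (- (x^2)) * (2^(2*n) * fact n * x^(2*n) / fact (2*n)) * laguerre n (real k + real m / 2 - 1) (r^2))
     sums (\<Sum>n\<le>N. real (N choose n) * (-2) powi (- int n) * Dr n (\<lambda>t. cos (2 * x * t)) r)" .
  define d where "d n i = 2^n * (diffs ^^ n) (bsin x) i" for n i
  have sd: "\<And>n z. summable (\<lambda>i. d n i * z^i)"
    unfolding d_def using diffs_pow_summable[OF bsin_summable] by (simp add: mult.assoc summable_mult)
  have D2: "\<And>n. Dup n (\<lambda>t. sin (2 * x * t)) r = r * (\<Sum>i. d n i * (r^2)^i)"
    unfolding d_def by (rule Dup_powser[OF bsin_summable sin_rep r0])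
  have p2: "\<And>j. (2::real)^(2*j+1) = 2 * 4^j" by (simp add: power_mult)
  have "(\<lambda>j. (exp (- (x^2)) * r) * (\<Sum>n\<le>N. K n * (if n \<le> j then (\<Sum>i\<le>j-n. d n i * (r^2)^i * ((x^2)^(j-n-i) / fact (j-n-i))) else 0)))
     sums ((exp (- (x^2)) * r) * (\<Sum>n\<le>N. K n * ((\<Sum>i. d n i * (r^2)^i) * exp (x^2))))"
    by (rule sums_mult[OF series_main[OF sd]])
  also have "(exp (- (x^2)) * r) * (\<Sum>n\<le>N. K n * ((\<Sum>i. d n i * (r^2)^i) * exp (x^2)))
      = (\<Sum>n\<le>N. real (N choose n) * (-2) powi (- int n) * Dup n (\<lambda>t. sin (2 * x * t)) r)"
    unfolding D2 K_def sum_distrib_left by (intro sum.cong refl) (use ex in \<open>simp add: algebra_simps\<close>)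
  also have "(\<lambda>j. (exp (- (x^2)) * r) * (\<Sum>n\<le>N. K n * (if n \<le> j then (\<Sum>i\<le>j-n. d n i * (r^2)^i * ((x^2)^(j-n-i) / fact (j-n-i))) else 0)))
     = (\<lambda>n. exp (- (x^2)) * (2^(2*n+1) * fact n * x^(2*n+1) / fact (2*n+1)) * r * laguerre n (real k + real m / 2) (r^2))"
    unfolding K_def d_def U_sin a2 p2 by (simp add: fun_eq_iff algebra_simps)
  finally have P2: "(\<lambda>n. exp (- (x^2)) * (2^(2*n+1) * fact n * x^(2*n+1) / fact (2*n+1)) * r * laguerre n (real k + real m / 2) (r^2))
     sums (\<Sum>n\<le>N. real (N choose n) * (-2) powi (- int n) * Dup n (\<lambda>t. sin (2 * x * t)) r)" .
  show ?thesis using P1 P2 by blast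
qed

end
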